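(* Let $\mathcal{S}\subseteq\mathcal{X}\times\mathcal{Y}$, $f:\mathcal{X}\times\mathcal{Y}\to\mathcal{V}$, and suppose $\mathcal{A}\times\mathcal{B}\subseteq\mathcal{X}\times\mathcal{Y}$ is solvable for $(\mathcal{S},f)$. Then for any $n$, $\mathbf{x}\in\mathcal{A}^n$, $\mathbf{y}\in\mathcal{B}^n$ with $(x_i,y_i)\in\mathcal{S}$ for all $i$, the type $f_n^{\mathsf t}(\mathbf{x},\mathbf{y})$ is uniquely determined by $P_{\mathbf{x}}$ and $P_{\mathbf{y}}$. More precisely, any two joint types $P^{(1)},P^{(2)}\in\mathcal{P}_n(\mathcal{A}\times\mathcal{B})$ with $\mathsf{supp}(P^{(j)})\subseteq\mathcal{S}$ and $\sum_{y\in\mathcal{B}}P^{(j)}(x,y)=P_{\mathbf{x}}(x)$ for all $x\in\mathcal{A}$, $\sum_{x\in\mathcal{A}}P^{(j)}(x,y)=P_{\mathbf{y}}(y)$ for all $y\in\mathcal{B}$ ($j=1,2$) satisfy $$\sum_{(x,y)\in\mathcal{A}\times\mathcal{B}:f(x,y)=v}P^{(1)}(x,y)=\sum_{(x,y)\in\mathcal{A}\times\mathcal{B}:f(x,y)=v}P^{(2)}(x,y)\quad\forall v\in\mathcal{V}.$$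
   Context: Finite alphabets. Types: $P_{\mathbf{s}}(s)=|\{i:s_i=s\}|/n$; $\mathcal{P}_n(\cdot)$ is the set of types of length-$n$ sequences. $f_n^{\mathsf t}(\mathbf{x},\mathbf{y})$ is the type of $(f(x_1,y_1),\dots,f(x_n,y_n))$. For $\mathcal{A}\times\mathcal{B}\subseteq\mathcal{X}\times\mathcal{Y}$, a simple loop is a set $\{(a_0,b_0),(a_0,b_1),(a_1,b_1),(a_1,b_2),\dots,(a_{k-2},b_{k-1}),(a_{k-1},b_{k-1}),(a_{k-1},b_0)\}\subseteq(\mathcal{A}\times\mathcal{B})\cap\mathcal{S}$ with the $a_i$ pairwise distinct and the $b_i$ pairwise distinct. For $v\in\mathcal{V}$ let $\mathcal{I}_+(v)=\{i: f(a_i,b_i)=v\}$ and $\mathcal{I}_-(v)=\{i: f(a_i,b_{i+1\bmod k})=v\}$. $\mathcal{A}\times\mathcal{B}$ is solvable for $(\mathcal{S},f)$ if every simple loop in it satisfies $|\mathcal{I}_+(v)|=|\mathcal{I}_-(v)|$ for all $v\in\mathcal{V}$. *)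

theory Defs
  imports Complex_Main
begin

definition tp :: "'a list \<Rightarrow> 'a \<Rightarrow> real" where
  "tp s a = real (count_list s a) / real (length s)"

definition types :: "nat \<Rightarrow> 'a set \<Rightarrow> ('a \<Rightarrow> real) set" where
  "types n C = {tp s | s. length s = n \<and> set s \<subseteq> C}"

definition supp :: "('a \<Rightarrow> real) \<Rightarrow> 'a set" where
  "supp P = {a. P a \<noteq> 0}"

definition simple_loop ::
  "'x set \<Rightarrow> 'y set \<Rightarrow> ('x \<times> 'y) set \<Rightarrow> nat \<Rightarrow> (nat \<Rightarrow> 'x) \<Rightarrow> (nat \<Rightarrow> 'y) \<Rightarrow> bool" where
  "simple_loop A B S k a b \<longleftrightarrow>
     k \<ge> 1 \<and> inj_on a {..<k} \<and> inj_on b {..<k} \<and>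
     (\<forall>i<k. (a i, b i) \<in> (A \<times> B) \<inter> S \<and> (a i, b ((i + 1) mod k)) \<in> (A \<times> B) \<inter> S)"

definition solvable ::
  "'x set \<Rightarrow> 'y set \<Rightarrow> ('x \<times> 'y) set \<Rightarrow> ('x \<Rightarrow> 'y \<Rightarrow> 'v) \<Rightarrow> bool" where
  "solvable A B S f \<longleftrightarrow>
     (\<forall>k a b. simple_loop A B S k a b \<longrightarrow>
        (\<forall>v. card {i. i < k \<and> f (a i) (b i) = v} =
             card {i. i < k \<and> f (a i) (b ((i + 1) mod k)) = v}))"

end

theory Submission
  imports Defs
begin
definition nxt :: "nat \<Rightarrow> nat \<Rightarrow> nat" where "nxt k m = (if Suc m = k then 0 else Suc m)"

definition cw :: "('x \<times> 'y \<Rightarrow> int) \<Rightarrow> nat \<Rightarrow> (nat \<Rightarrow> 'x) \<Rightarrow> (nat \<Rightarrow> 'y) \<Rightarrow> bool" where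
 "cw D k a b \<longleftrightarrow> k \<ge> 1 \<and> (\<forall>m<k. D (a m, b m) > 0 \<and> D (a m, b (nxt k m)) < 0)"

lemma cw_short_a:
  assumes "cw D k a b" "s < t" "t < k" "a s = a t"
  shows "cw D (k-(t-s)) (\<lambda>u. a (if u < s then u else u+(t-s))) (\<lambda>u. b (if u \<le> s then u else u+(t-s)))"
proof -
  from assms(1) have P: "\<And>m. m<k \<Longrightarrow> D (a m, b m) > 0" and N: "\<And>m. m<k \<Longrightarrow> D (a m, b (nxt k m)) < 0" unfolding cw_def by auto
  show ?thesis unfolding cw_def
  proof (intro conjI allI impI)
    show "1 \<le> k-(t-s)" using assms by auto
  next
    fix u assume u: "u < k-(t-s)"
    show "D (a (if u < s then u else u+(t-s)), b (if u \<le> s then u else u+(t-s))) > 0"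
    proof (cases "u = s")
      case True thus ?thesis using P[of s] assms by auto
    next
      case False thus ?thesis using P[of u] P[of "u+(t-s)"] u assms by auto
    qed
  next
    fix u assume u: "u < k-(t-s)"
    have "D (a (if u < s then u else u+(t-s)), b (if nxt (k-(t-s)) u \<le> s then nxt (k-(t-s)) u else nxt (k-(t-s)) u+(t-s))) < 0"
    proof (cases "Suc u = k-(t-s)")
      case True
      then have "nxt k (u+(t-s)) = 0" using assms unfolding nxt_def by auto
      then show ?thesis using N[of "u+(t-s)"] True assms unfolding nxt_def by auto
    next
      case False
      show ?thesis
      proof (cases "u < s")
        case True
        then show ?thesis using N[of u] False assms u unfolding nxt_def by auto
      next
        case F2: False
        have "nxt k (u+(t-s)) = Suc u + (t-s)" using False u assms unfolding nxt_def by auto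
        then show ?thesis using N[of "u+(t-s)"] F2 False assms u unfolding nxt_def by auto
      qed
    qed
    then show "D (a (if u < s then u else u+(t-s)), b (if nxt (k-(t-s)) u \<le> s then nxt (k-(t-s)) u else nxt (k-(t-s)) u+(t-s))) < 0" .
  qed
qed

lemma cw_short_b:
  assumes "cw D k a b" "s < t" "t < k" "b s = b t"
  shows "cw D (k-(t-s)) (\<lambda>u. a (if u < s then u else u+(t-s))) (\<lambda>u. b (if u < s then u else u+(t-s)))"
proof -
  from assms(1) have P: "\<And>m. m<k \<Longrightarrow> D (a m, b m) > 0" and N: "\<And>m. m<k \<Longrightarrow> D (a m, b (nxt k m)) < 0" unfolding cw_def by auto
  show ?thesis unfolding cw_def
  proof (intro conjI allI impI)
    show "1 \<le> k-(t-s)" using assms by auto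
  next
    fix u assume u: "u < k-(t-s)"
    show "D (a (if u < s then u else u+(t-s)), b (if u < s then u else u+(t-s))) > 0"
      using P[of u] P[of "u+(t-s)"] u assms by auto
  next
    fix u assume u: "u < k-(t-s)"
    have "D (a (if u < s then u else u+(t-s)), b (if nxt (k-(t-s)) u < s then nxt (k-(t-s)) u else nxt (k-(t-s)) u+(t-s))) < 0"
    proof (cases "Suc u = k-(t-s)")
      case True
      then have "nxt k (u+(t-s)) = 0" using assms unfolding nxt_def by auto
      then show ?thesis using N[of "u+(t-s)"] True assms unfolding nxt_def by (cases "s = 0") auto
    next
      case False
      show ?thesis
      proof (cases "Suc u < s")
        case True
        then show ?thesis using N[of u] False assms u unfolding nxt_def by auto
      next
        case F2: False
        show ?thesis
        proof (cases "Suc u = s")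
          case True
          then show ?thesis using N[of u] False assms u unfolding nxt_def by auto
        next
          case F3: False
          have "nxt k (u+(t-s)) = Suc u + (t-s)" using False u assms unfolding nxt_def by auto
          then show ?thesis using N[of "u+(t-s)"] F2 F3 False assms u unfolding nxt_def by auto
        qed
      qed
    qed
    then show "D (a (if u < s then u else u+(t-s)), b (if nxt (k-(t-s)) u < s then nxt (k-(t-s)) u else nxt (k-(t-s)) u+(t-s))) < 0" .
  qed
qed

lemma neg_in: fixes g :: "'a::finite \<Rightarrow> int" assumes "sum g UNIV = 0" "g i0 > 0" shows "\<exists>i. g i < 0"
proof (rule ccontr)
  assume "\<not> ?thesis" hence ge: "\<And>i. g i \<ge> 0" by (simp add: not_less)
  have "g i0 \<le> sum g UNIV" using ge by (intro member_le_sum) auto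
  with assms show False by auto
qed

lemma pos_in: fixes g :: "'a::finite \<Rightarrow> int" assumes "sum g UNIV = 0" "g i0 < 0" shows "\<exists>i. g i > 0"
  using neg_in[of "\<lambda>i. - g i" i0] assms by (auto simp: sum_negf)

lemma cw_exists:
  fixes D :: "'x::finite \<times> 'y::finite \<Rightarrow> int"
  assumes R: "\<forall>x. (\<Sum>y\<in>UNIV. D (x,y)) = 0" and C: "\<forall>y. (\<Sum>x\<in>UNIV. D (x,y)) = 0" and p0: "D p0 > 0"
  shows "\<exists>k a b. cw D k a b"
proof -
  define nb where "nb x = (SOME y. D (x,y) < 0)" for x
  define na where "na y = (SOME x. D (x,y) > 0)" for y
  have nb: "D (x, nb x) < 0" if "D (x,y) > 0" for x y
  proof -
    have "\<exists>y. D (x,y) < 0" using neg_in[of "\<lambda>y. D(x,y)" y] R that by auto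
    thus ?thesis unfolding nb_def by (rule someI_ex)
  qed
  have na: "D (na y, y) > 0" if "D (x,y) < 0" for x y
  proof -
    have "\<exists>x. D (x,y) > 0" using pos_in[of "\<lambda>x. D(x,y)" x] C that by auto
    thus ?thesis unfolding na_def by (rule someI_ex)
  qed
  define w where "w = rec_nat p0 (\<lambda>_ p. (na (nb (fst p)), nb (fst p)))"
  have w0: "w 0 = p0" and wS: "\<And>i. w (Suc i) = (na (nb (fst (w i))), nb (fst (w i)))"
    unfolding w_def by auto
  have pos: "D (w i) > 0" for i
  proof (induction i)
    case 0 thus ?case using w0 p0 by simp
  next
    case (Suc i)
    have "D (fst (w i), snd (w i)) > 0" using Suc by simp
    hence "D (fst (w i), nb (fst (w i))) < 0" by (rule nb)
    hence "D (na (nb (fst (w i))), nb (fst (w i))) > 0" by (rule na)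
    thus ?case using wS by simp
  qed
  have neg: "D (fst (w i), snd (w (Suc i))) < 0" for i
  proof -
    have "D (fst (w i), snd (w i)) > 0" using pos[of i] by simp
    hence "D (fst (w i), nb (fst (w i))) < 0" by (rule nb)
    thus ?thesis using wS by simp
  qed
  have "\<not> inj w"
  proof
    assume "inj w"
    have "finite (range w)" by simp
    hence "finite (UNIV::nat set)" using \<open>inj w\<close> finite_imageD by blast
    thus False by simp
  qed
  then obtain i j where ij: "i < j" "w i = w j"
    unfolding inj_def by (metis linorder_neq_iff)
  define k where "k = j - i"
  define a where "a t = fst (w (i+t))" for t
  define b where "b t = snd (w (i+t))" for t
  have "cw D k a b" unfolding cw_def
  proof (intro conjI allI impI)
    show "1 \<le> k" using ij k_def by auto
  next
    fix m assume "m < k"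
    show "D (a m, b m) > 0" using pos[of "i+m"] unfolding a_def b_def by simp
    show "D (a m, b (nxt k m)) < 0"
    proof (cases "Suc m = k")
      case True
      hence "Suc (i+m) = j" using ij k_def by auto
      hence "b (nxt k m) = snd (w (Suc (i+m)))" using ij True unfolding b_def nxt_def by auto
      thus ?thesis using neg[of "i+m"] unfolding a_def by simp
    next
      case False
      hence "b (nxt k m) = snd (w (Suc (i+m)))" unfolding b_def nxt_def by auto
      thus ?thesis using neg[of "i+m"] unfolding a_def by simp
    qed
  qed
  thus ?thesis by blast
qed

lemma cw_min_inj:
  assumes "cw D k a b" "\<forall>m<k. \<not> (\<exists>a b. cw D m a b)"
  shows "inj_on a {..<k} \<and> inj_on b {..<k}"
proof
  have k1: "k \<ge> 1" using assms(1) unfolding cw_def by auto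
  show "inj_on a {..<k}"
  proof (rule inj_onI, rule ccontr)
    fix s t assume st: "s \<in> {..<k}" "t \<in> {..<k}" "a s = a t" "s \<noteq> t"
    show False
    proof (cases "s < t")
      case True
      from cw_short_a[OF assms(1) True] st have "\<exists>a b. cw D (k-(t-s)) a b" by auto
      moreover have "k-(t-s) < k" using True st by auto
      ultimately show False using assms(2) by blast
    next
      case False
      hence "t < s" using st by auto
      from cw_short_a[OF assms(1) this] st have "\<exists>a b. cw D (k-(s-t)) a b" by auto
      moreover have "k-(s-t) < k" using \<open>t < s\<close> st by auto
      ultimately show False using assms(2) by blast
    qed
  qed
  show "inj_on b {..<k}"
  proof (rule inj_onI, rule ccontr)
    fix s t assume st: "s \<in> {..<k}" "t \<in> {..<k}" "b s = b t" "s \<noteq> t"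
    show False
    proof (cases "s < t")
      case True
      from cw_short_b[OF assms(1) True] st have "\<exists>a b. cw D (k-(t-s)) a b" by auto
      moreover have "k-(t-s) < k" using True st by auto
      ultimately show False using assms(2) by blast
    next
      case False
      hence "t < s" using st by auto
      from cw_short_b[OF assms(1) this] st have "\<exists>a b. cw D (k-(s-t)) a b" by auto
      moreover have "k-(s-t) < k" using \<open>t < s\<close> st by auto
      ultimately show False using assms(2) by blast
    qed
  qed
qed

lemma cnt01: fixes k :: nat
  assumes "inj_on a {..<k}"
  shows "(\<Sum>i<k. of_bool ((a i, c i) = p) :: int) = of_bool (\<exists>i<k. (a i, c i) = p)"
proof (cases "\<exists>i<k. (a i, c i) = p")
  case True
  then obtain i where i: "i < k" "(a i, c i) = p" by auto
  have "(\<Sum>j<k. of_bool ((a j, c j) = p) :: int) = (\<Sum>j<k. of_bool (j = i))"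
  proof (rule sum.cong)
    fix j assume "j \<in> {..<k}"
    hence "(a j, c j) = p \<longleftrightarrow> j = i" using i assms unfolding inj_on_def by auto
    thus "of_bool ((a j, c j) = p) = (of_bool (j = i)::int)" by simp
  qed simp
  also have "\<dots> = (\<Sum>j<k. if j = i then 1 else 0)" by (simp add: of_bool_def)
  also have "\<dots> = 1" using i(1) by simp
  finally show ?thesis using True by simp
next
  case False thus ?thesis by simp
qed

lemma row_cnt: fixes c :: "nat \<Rightarrow> 'b::finite" and k :: nat shows "(\<Sum>y\<in>UNIV. \<Sum>i<k. of_bool ((a i, c i) = (x,y)) :: int) = (\<Sum>i<k. of_bool (a i = x))"
proof -
  have "(\<Sum>y\<in>UNIV. \<Sum>i<k. of_bool ((a i, c i) = (x,y)) :: int) = (\<Sum>i<k. \<Sum>y\<in>UNIV. of_bool ((a i, c i) = (x,y)))"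
    by (rule sum.swap)
  also have "\<dots> = (\<Sum>i<k. of_bool (a i = x))"
  proof (intro sum.cong refl)
    fix i
    have "\<And>y. (of_bool ((a i, c i) = (x,y))::int) = (if y = c i then of_bool (a i = x) else 0)" by auto
    thus "(\<Sum>y\<in>UNIV. of_bool ((a i, c i) = (x,y))::int) = of_bool (a i = x)" by (simp add: sum.delta)
  qed
  finally show ?thesis .
qed

lemma nxt_sum: fixes k :: nat assumes "k \<ge> 1" shows "(\<Sum>i<k. g (nxt k i)) = (\<Sum>i<k. g i)"
proof -
  obtain m where m: "k = Suc m" using assms by (cases k) auto
  have "(\<Sum>i<k. g (nxt k i)) = (\<Sum>i<m. g (nxt k i)) + g (nxt k m)" using m by simp
  also have "(\<Sum>i<m. g (nxt k i)) = (\<Sum>i<m. g (Suc i))"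
    by (intro sum.cong refl) (auto simp: nxt_def m)
  also have "g (nxt k m) = g 0" by (simp add: nxt_def m)
  also have "(\<Sum>i<m. g (Suc i)) + g 0 = (\<Sum>i<k. g i)" by (subst m, subst sum.lessThan_Suc_shift, rule add.commute)
  finally show ?thesis .
qed

lemma col_cnt: fixes c :: "nat \<Rightarrow> 'b" and a :: "nat \<Rightarrow> 'a::finite" and k :: nat
  shows "(\<Sum>x\<in>UNIV. \<Sum>i<k. of_bool ((a i, c i) = (x,y)) :: int) = (\<Sum>i<k. of_bool (c i = y))"
proof -
  have "(\<Sum>x\<in>UNIV. \<Sum>i<k. of_bool ((a i, c i) = (x,y)) :: int) = (\<Sum>i<k. \<Sum>x\<in>UNIV. of_bool ((a i, c i) = (x,y)))"
    by (rule sum.swap)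
  also have "\<dots> = (\<Sum>i<k. of_bool (c i = y))"
  proof (intro sum.cong refl)
    fix i
    have "\<And>x. (of_bool ((a i, c i) = (x,y))::int) = (if x = a i then of_bool (c i = y) else 0)" by auto
    thus "(\<Sum>x\<in>UNIV. of_bool ((a i, c i) = (x,y))::int) = of_bool (c i = y)" by (simp add: sum.delta)
  qed
  finally show ?thesis .
qed

lemma set_cnt: fixes k :: nat assumes "finite T"
  shows "(\<Sum>p\<in>T. \<Sum>i<k. of_bool (q i = p) :: int) = int (card {i. i < k \<and> q i \<in> T})"
proof -
  have "(\<Sum>p\<in>T. \<Sum>i<k. of_bool (q i = p) :: int) = (\<Sum>i<k. \<Sum>p\<in>T. of_bool (q i = p))"
    by (rule sum.swap)
  also have "\<dots> = (\<Sum>i<k. of_bool (q i \<in> T))"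
  proof (intro sum.cong refl)
    fix i
    have "\<And>p. (of_bool (q i = p)::int) = (if q i = p then 1 else 0)" by auto
    thus "(\<Sum>p\<in>T. of_bool (q i = p)::int) = of_bool (q i \<in> T)" using assms by (simp add: sum.delta')
  qed
  also have "\<dots> = int (card ({..<k} \<inter> {i. q i \<in> T}))" by simp
  also have "{..<k} \<inter> {i. q i \<in> T} = {i. i < k \<and> q i \<in> T}" by auto
  finally show ?thesis .
qed

lemma main:
  fixes D :: "'x::finite \<times> 'y::finite \<Rightarrow> int" and f :: "'x \<Rightarrow> 'y \<Rightarrow> 'v"
  assumes sol: "solvable A B S f"
  shows "(\<forall>p. D p \<noteq> 0 \<longrightarrow> p \<in> (A \<times> B) \<inter> S) \<Longrightarrow> (\<forall>x. (\<Sum>y\<in>UNIV. D (x,y)) = 0) \<Longrightarrow>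
     (\<forall>y. (\<Sum>x\<in>UNIV. D (x,y)) = 0) \<Longrightarrow> (\<Sum>p\<in>{p \<in> A \<times> B. f (fst p) (snd p) = v}. D p) = 0"
proof (induction "nat (\<Sum>p\<in>UNIV. \<bar>D p\<bar>)" arbitrary: D rule: less_induct)
  case less
  show ?case
  proof (cases "\<forall>p. D p = 0")
    case True hence "D = (\<lambda>_. 0)" by auto
    thus ?thesis by simp
  next
    case False
    then obtain p1 where "D p1 \<noteq> 0" by auto
    have "\<exists>p0. D p0 > 0"
    proof (cases "D p1 > 0")
      case True thus ?thesis by blast
    next
      case False with \<open>D p1 \<noteq> 0\<close> have "D p1 < 0" by auto
      from pos_in[of "\<lambda>x. D(x, snd p1)" "fst p1"] less.prems(3) this show ?thesis by auto
    qed
    then obtain p0 where "D p0 > 0" ..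
    from cw_exists[OF less.prems(2,3) this] have "\<exists>k a b. cw D k a b" .
    then obtain k where k: "\<exists>a b. cw D k a b" "\<forall>m<k. \<not>(\<exists>a b. cw D m a b)"
      using exists_least_iff[of "\<lambda>k. \<exists>a b. cw D k a b"] by blast
    then obtain a b where ab: "cw D k a b" by blast
    from cw_min_inj[OF ab k(2)] have inja: "inj_on a {..<k}" and injb: "inj_on b {..<k}" by auto
    from ab have k1: "k \<ge> 1" and P: "\<And>m. m<k \<Longrightarrow> D (a m, b m) > 0"
      and N: "\<And>m. m<k \<Longrightarrow> D (a m, b (nxt k m)) < 0" unfolding cw_def by auto
    have nxtmod: "\<And>i. i<k \<Longrightarrow> (i+1) mod k = nxt k i" unfolding nxt_def by auto
    have inAB1: "(a i, b i) \<in> (A\<times>B) \<inter> S" if "i<k" for i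
      using P[OF that] less.prems(1) by (metis less_irrefl)
    have inAB2: "(a i, b (nxt k i)) \<in> (A\<times>B) \<inter> S" if "i<k" for i
      using N[OF that] less.prems(1) by (metis less_irrefl)
    have loop: "simple_loop A B S k a b" unfolding simple_loop_def using k1 inja injb inAB1 inAB2 nxtmod by auto
    from sol loop have cardeq: "card {i. i<k \<and> f (a i) (b i) = v} = card {i. i<k \<and> f (a i) (b ((i+1) mod k)) = v}"
      unfolding solvable_def by blast
    define cp where "cp p = (\<Sum>i<k. of_bool ((a i, b i) = p) :: int)" for p
    define cn where "cn p = (\<Sum>i<k. of_bool ((a i, b (nxt k i)) = p) :: int)" for p
    define D' where "D' p = D p - cp p + cn p" for p
    have cp01: "cp p = of_bool (\<exists>i<k. (a i, b i) = p)" for p unfolding cp_def by (rule cnt01[OF inja])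
    have cn01: "cn p = of_bool (\<exists>i<k. (a i, b (nxt k i)) = p)" for p unfolding cn_def by (rule cnt01[OF inja])
    have le: "\<bar>D' p\<bar> \<le> \<bar>D p\<bar>" for p
    proof (cases "\<exists>i<k. (a i, b i) = p")
      case True
      then obtain i where "i<k" "(a i, b i) = p" by auto
      hence "D p > 0" using P by auto
      hence "\<not> (\<exists>i<k. (a i, b (nxt k i)) = p)" using N by force
      thus ?thesis using True \<open>D p > 0\<close> unfolding D'_def cp01 cn01 by auto
    next
      case False
      show ?thesis
      proof (cases "\<exists>i<k. (a i, b (nxt k i)) = p")
        case True
        then obtain i where "i<k" "(a i, b (nxt k i)) = p" by auto
        hence "D p < 0" using N by auto
        thus ?thesis using True False unfolding D'_def cp01 cn01 by auto
      next
        case F2: False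
        thus ?thesis using False unfolding D'_def cp01 cn01 by auto
      qed
    qed
    have lt: "\<bar>D' (a 0, b 0)\<bar> < \<bar>D (a 0, b 0)\<bar>"
    proof -
      have "D (a 0, b 0) > 0" using P k1 by auto
      hence "\<not> (\<exists>i<k. (a i, b (nxt k i)) = (a 0, b 0))" using N by force
      moreover have "\<exists>i<k. (a i, b i) = (a 0, b 0)" using k1 by (intro exI[of _ 0]) auto
      ultimately show ?thesis using \<open>D (a 0, b 0) > 0\<close> unfolding D'_def cp01 cn01 by auto
    qed
    have "(\<Sum>p\<in>UNIV. \<bar>D' p\<bar>) < (\<Sum>p\<in>UNIV. \<bar>D p\<bar>)"
      by (rule sum_strict_mono_ex1) (use le lt in auto)
    hence dec: "nat (\<Sum>p\<in>UNIV. \<bar>D' p\<bar>) < nat (\<Sum>p\<in>UNIV. \<bar>D p\<bar>)"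
    proof -
      have "0 \<le> (\<Sum>p\<in>UNIV. \<bar>D' p\<bar>)" by (rule sum_nonneg) simp
      thus ?thesis using \<open>(\<Sum>p\<in>UNIV. \<bar>D' p\<bar>) < (\<Sum>p\<in>UNIV. \<bar>D p\<bar>)\<close> by linarith
    qed
    have supp': "\<forall>p. D' p \<noteq> 0 \<longrightarrow> p \<in> (A \<times> B) \<inter> S"
    proof (intro allI impI)
      fix p assume "D' p \<noteq> 0"
      hence "D p \<noteq> 0 \<or> cp p \<noteq> 0 \<or> cn p \<noteq> 0" unfolding D'_def by auto
      moreover have "D p \<noteq> 0 \<Longrightarrow> p \<in> (A \<times> B) \<inter> S" using less.prems(1) by blast
      ultimately show "p \<in> (A \<times> B) \<inter> S" using inAB1 inAB2 unfolding cp01 cn01 by (auto split: if_splits)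
    qed
    have rowcp: "(\<Sum>y\<in>UNIV. cp (x,y)) = (\<Sum>i<k. of_bool (a i = x))" for x
      unfolding cp_def by (rule row_cnt)
    have rowcn: "(\<Sum>y\<in>UNIV. cn (x,y)) = (\<Sum>i<k. of_bool (a i = x))" for x
      unfolding cn_def by (rule row_cnt)
    have colcp: "(\<Sum>x\<in>UNIV. cp (x,y)) = (\<Sum>i<k. of_bool (b i = y))" for y
      unfolding cp_def by (rule col_cnt)
    have colcn: "(\<Sum>x\<in>UNIV. cn (x,y)) = (\<Sum>i<k. of_bool (b i = y))" for y
      unfolding cn_def col_cnt using nxt_sum[OF k1, of "\<lambda>i. of_bool (b i = y) :: int"] by simp
    have R': "\<forall>x. (\<Sum>y\<in>UNIV. D' (x,y)) = 0"
      using less.prems(2) rowcp rowcn unfolding D'_def by (simp add: sum.distrib sum_subtractf)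
    have C': "\<forall>y. (\<Sum>x\<in>UNIV. D' (x,y)) = 0"
      using less.prems(3) colcp colcn unfolding D'_def by (simp add: sum.distrib sum_subtractf)
    from less.hyps[OF dec supp' R' C']
    have IH: "(\<Sum>p\<in>{p \<in> A \<times> B. f (fst p) (snd p) = v}. D' p) = 0" .
    let ?T = "{p \<in> A \<times> B. f (fst p) (snd p) = v}"
    have fT: "finite ?T" by simp
    have "(\<Sum>p\<in>?T. cp p) = int (card {i. i < k \<and> (a i, b i) \<in> ?T})"
      unfolding cp_def by (rule set_cnt[OF fT])
    also have "{i. i < k \<and> (a i, b i) \<in> ?T} = {i. i<k \<and> f (a i) (b i) = v}" using inAB1 by auto
    finally have sp: "(\<Sum>p\<in>?T. cp p) = int (card {i. i<k \<and> f (a i) (b i) = v})" .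
    have "(\<Sum>p\<in>?T. cn p) = int (card {i. i < k \<and> (a i, b (nxt k i)) \<in> ?T})"
      unfolding cn_def by (rule set_cnt[OF fT])
    also have "{i. i < k \<and> (a i, b (nxt k i)) \<in> ?T} = {i. i<k \<and> f (a i) (b ((i+1) mod k)) = v}"
      using inAB2 nxtmod by auto
    finally have sn: "(\<Sum>p\<in>?T. cn p) = int (card {i. i<k \<and> f (a i) (b ((i+1) mod k)) = v})" .
    have "(\<Sum>p\<in>?T. D p) = (\<Sum>p\<in>?T. D' p) + (\<Sum>p\<in>?T. cp p) - (\<Sum>p\<in>?T. cn p)"
      unfolding D'_def by (simp add: sum.distrib sum_subtractf)
    thus ?thesis using IH sp sn cardeq by simp
  qed
qed
theorem lemma2:
  fixes S :: "('x::finite \<times> 'y::finite) set"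
    and f :: "'x \<Rightarrow> 'y \<Rightarrow> 'v"
    and A :: "'x set" and B :: "'y set"
    and n :: nat and xs :: "'x list" and ys :: "'y list"
    and P1 P2 :: "'x \<times> 'y \<Rightarrow> real"
  assumes "solvable A B S f"
    and "length xs = n" and "length ys = n"
    and "set xs \<subseteq> A" and "set ys \<subseteq> B"
    and "\<forall>i<n. (xs ! i, ys ! i) \<in> S"
    and "P1 \<in> types n (A \<times> B)" and "P2 \<in> types n (A \<times> B)"
    and "supp P1 \<subseteq> S" and "supp P2 \<subseteq> S"
    and "\<forall>x\<in>A. (\<Sum>y\<in>B. P1 (x, y)) = tp xs x"
    and "\<forall>y\<in>B. (\<Sum>x\<in>A. P1 (x, y)) = tp ys y"
    and "\<forall>x\<in>A. (\<Sum>y\<in>B. P2 (x, y)) = tp xs x"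
    and "\<forall>y\<in>B. (\<Sum>x\<in>A. P2 (x, y)) = tp ys y"
  shows "\<forall>v. (\<Sum>p\<in>{p \<in> A \<times> B. f (fst p) (snd p) = v}. P1 p)
            = (\<Sum>p\<in>{p \<in> A \<times> B. f (fst p) (snd p) = v}. P2 p)"
proof
  fix v
  let ?T = "{p \<in> A \<times> B. f (fst p) (snd p) = v}"
  from assms(7) obtain s1 where s1: "P1 = tp s1" "length s1 = n" "set s1 \<subseteq> A \<times> B" unfolding types_def by auto
  from assms(8) obtain s2 where s2: "P2 = tp s2" "length s2 = n" "set s2 \<subseteq> A \<times> B" unfolding types_def by auto
  show "(\<Sum>p\<in>?T. P1 p) = (\<Sum>p\<in>?T. P2 p)"
  proof (cases "n = 0")
    case True
    hence "s1 = []" "s2 = []" using s1 s2 by auto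
    hence "P1 = P2" using s1 s2 by simp
    thus ?thesis by simp
  next
    case False
    define D where "D p = int (count_list s1 p) - int (count_list s2 p)" for p
    have DR: "real_of_int (D p) = real n * (P1 p - P2 p)" for p
      using s1 s2 False unfolding D_def tp_def by (simp add: field_simps)
    have sup: "\<forall>p. D p \<noteq> 0 \<longrightarrow> p \<in> (A \<times> B) \<inter> S"
    proof (intro allI impI)
      fix p assume "D p \<noteq> 0"
      hence "count_list s1 p \<noteq> 0 \<or> count_list s2 p \<noteq> 0" unfolding D_def by auto
      moreover have "P1 p \<noteq> 0" if "count_list s1 p \<noteq> 0" using that s1 False unfolding tp_def by simp
      moreover have "P2 p \<noteq> 0" if "count_list s2 p \<noteq> 0" using that s2 False unfolding tp_def by simp
      moreover have "p \<in> set s1" if "count_list s1 p \<noteq> 0" using that by (simp add: count_list_0_iff)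
      moreover have "p \<in> set s2" if "count_list s2 p \<noteq> 0" using that by (simp add: count_list_0_iff)
      ultimately show "p \<in> (A \<times> B) \<inter> S" using s1(3) s2(3) assms(9,10) unfolding supp_def by blast
    qed
    have R: "\<forall>x. (\<Sum>y\<in>UNIV. D (x,y)) = 0"
    proof
      fix x
      have e: "(\<Sum>y\<in>UNIV. D (x,y)) = (\<Sum>y\<in>B. D (x,y))"
        by (rule sum.mono_neutral_right) (use sup in auto)
      show "(\<Sum>y\<in>UNIV. D (x,y)) = 0"
      proof (cases "x \<in> A")
        case True
        have "real_of_int (\<Sum>y\<in>B. D (x,y)) = real n * ((\<Sum>y\<in>B. P1 (x,y)) - (\<Sum>y\<in>B. P2 (x,y)))"
          by (simp add: DR sum_distrib_left sum_subtractf right_diff_distrib)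
        also have "\<dots> = 0" using True assms(11,13) by simp
        finally have "real_of_int (\<Sum>y\<in>B. D (x,y)) = 0" .
        hence "(\<Sum>y\<in>B. D (x,y)) = 0" by (simp only: of_int_eq_0_iff)
        thus ?thesis using e by simp
      next
        case False
        hence "\<And>y. D (x,y) = 0" using sup by blast
        thus ?thesis by simp
      qed
    qed
    have C: "\<forall>y. (\<Sum>x\<in>UNIV. D (x,y)) = 0"
    proof
      fix y
      have e: "(\<Sum>x\<in>UNIV. D (x,y)) = (\<Sum>x\<in>A. D (x,y))"
        by (rule sum.mono_neutral_right) (use sup in auto)
      show "(\<Sum>x\<in>UNIV. D (x,y)) = 0"
      proof (cases "y \<in> B")
        case True
        have "real_of_int (\<Sum>x\<in>A. D (x,y)) = real n * ((\<Sum>x\<in>A. P1 (x,y)) - (\<Sum>x\<in>A. P2 (x,y)))"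
          by (simp add: DR sum_distrib_left sum_subtractf right_diff_distrib)
        also have "\<dots> = 0" using True assms(12,14) by simp
        finally have "real_of_int (\<Sum>x\<in>A. D (x,y)) = 0" .
        hence "(\<Sum>x\<in>A. D (x,y)) = 0" by (simp only: of_int_eq_0_iff)
        thus ?thesis using e by simp
      next
        case False
        hence "\<And>x. D (x,y) = 0" using sup by blast
        thus ?thesis by simp
      qed
    qed
    have "(\<Sum>p\<in>?T. D p) = 0" by (rule main[OF assms(1) sup R C])
    hence "real_of_int (\<Sum>p\<in>?T. D p) = 0" by simp
    hence "real n * ((\<Sum>p\<in>?T. P1 p) - (\<Sum>p\<in>?T. P2 p)) = 0"
      by (simp add: DR sum_distrib_left sum_subtractf right_diff_distrib)
    thus ?thesis using False by simp
  qed
qed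

end
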